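(* Let $\Omega\subset\mathbb{R}^p$ be a domain, $f\in AP(T_\Omega)$, $f\not\equiv0$, let $D_0$ be a connected component of $\Omega\setminus A_f$ and let $D'_0\Subset D_0$. Then there is $\beta>0$ with $|f(z)|\ge\beta$ for all $z\in T_{D'_0}$.
   Context: $T_\Omega=\{x+iy:\ x\in\mathbb{R}^p,\ y\in\Omega\}$. $AP(T_\Omega)$ is the class of holomorphic $f$ on $T_\Omega$ whose translates $\{f(z+t)\}_{t\in\mathbb{R}^p}$ form a relatively compact family in the topology of uniform convergence on every $T_D$, $D\Subset\Omega$. The amoeba $A_f$ is the closure in $\Omega$ of $\{y\in\Omega:\ \exists x\in\mathbb{R}^p,\ f(x+iy)=0\}$. *)

theory Defs
  imports "HOL-Analysis.Analysis"
begin

text \<open>Points of C^p are vectors complex^'n; the index type 'n (finite) plays the role of {1..p}.\<close>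

definition re_part :: "complex^'n \<Rightarrow> real^'n" where
  "re_part z = (\<chi> i. Re (z $ i))"

definition im_part :: "complex^'n \<Rightarrow> real^'n" where
  "im_part z = (\<chi> i. Im (z $ i))"

definition cvec :: "real^'n \<Rightarrow> real^'n \<Rightarrow> complex^'n" where
  "cvec x y = (\<chi> i. Complex (x $ i) (y $ i))"

definition tube :: "(real^'n) set \<Rightarrow> (complex^'n) set" where
  "tube \<Omega> = {z. im_part z \<in> \<Omega>}"

definition holomorphic_several :: "(complex^'n \<Rightarrow> complex) \<Rightarrow> (complex^'n) set \<Rightarrow> bool" where
  "holomorphic_several f U \<longleftrightarrow> open U \<and>
     (\<forall>z\<in>U. \<exists>L. (f has_derivative L) (at z) \<and> (\<forall>c v. L (c *s v) = c * L v))"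

definition compactly_contained :: "'a::topological_space set \<Rightarrow> 'a set \<Rightarrow> bool" (infix "\<Subset>" 50) where
  "D \<Subset> \<Omega> \<longleftrightarrow> compact (closure D) \<and> closure D \<subseteq> \<Omega>"

definition rtrans :: "complex^'n \<Rightarrow> real^'n \<Rightarrow> complex^'n" where
  "rtrans z t = z + (\<chi> i. complex_of_real (t $ i))"

text \<open>AP(T_Omega): holomorphic, and the family of real translates is relatively compact
  in the (metrizable) topology of uniform convergence on every T_D with D compactly contained
  in Omega; expressed via sequential relative compactness.\<close>
definition AP :: "(real^'n) set \<Rightarrow> (complex^'n \<Rightarrow> complex) set" where
  "AP \<Omega> = {f. holomorphic_several f (tube \<Omega>) \<and>
     (\<forall>t :: nat \<Rightarrow> real^'n. \<exists>r g. strict_mono r \<and>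
        (\<forall>D. D \<Subset> \<Omega> \<longrightarrow>
           uniform_limit (tube D) (\<lambda>n z. f (rtrans z (t (r n)))) g sequentially))}"

definition amoeba :: "(real^'n) set \<Rightarrow> (complex^'n \<Rightarrow> complex) \<Rightarrow> (real^'n) set" where
  "amoeba \<Omega> f = closure {y \<in> \<Omega>. \<exists>x. f (cvec x y) = 0} \<inter> \<Omega>"

end

theory Submission
  imports Defs "HOL-Complex_Analysis.Complex_Analysis"
begin

lemma im_rtrans[simp]: "im_part (rtrans z t) = im_part z"
  by (simp add: im_part_def rtrans_def vec_eq_iff)
lemma re_rtrans[simp]: "re_part (rtrans z t) = re_part z + t"
  by (simp add: re_part_def rtrans_def vec_eq_iff)
lemma cvec_parts[simp]: "cvec (re_part z) (im_part z) = z"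
  by (simp add: re_part_def im_part_def cvec_def vec_eq_iff complex_eq_iff)
lemma im_cvec[simp]: "im_part (cvec x y) = y"
  by (simp add: im_part_def cvec_def vec_eq_iff)
lemma re_cvec[simp]: "re_part (cvec x y) = x"
  by (simp add: re_part_def cvec_def vec_eq_iff)
lemma tube_rtrans[simp]: "rtrans z t \<in> tube S \<longleftrightarrow> z \<in> tube S"
  by (simp add: tube_def)
lemma rtrans_add: "rtrans (z + w) t = rtrans z t + w"
  by (simp add: rtrans_def)
lemma rtrans_rtrans: "rtrans (rtrans z t) s = rtrans z (t + s)"
  by (simp add: rtrans_def vec_eq_iff)
lemma rtrans_cvec0: "rtrans (cvec 0 y) x = cvec x y"
  by (simp add: rtrans_def cvec_def vec_eq_iff complex_eq_iff)
lemma rtrans_zero[simp]: "rtrans z 0 = z"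
  by (simp add: rtrans_def vec_eq_iff)

lemma norm_smult_vec: "norm ((c::complex) *s (v::complex^'n)) = norm c * norm v"
  by (simp add: norm_vec_def L2_set_right_distrib norm_mult)

lemma norm_cvec0: "norm (cvec 0 y - cvec 0 y') = norm (y - y')"
proof -
  have "\<And>i. cmod (Complex 0 (y $ i) - Complex 0 (y' $ i)) = norm (y $ i - y' $ i)"
    by (simp add: cmod_def)
  then show ?thesis by (simp add: norm_vec_def cvec_def)
qed

lemma bl_smult: "bounded_linear (\<lambda>c::complex. c *s (v::complex^'n))"
  by (rule bounded_linear_intro[where K="norm v"])
     (auto simp: vec_eq_iff algebra_simps norm_smult_vec)

lemma line_holo:
  assumes "holomorphic_several f U" "open L" "\<And>l. l \<in> L \<Longrightarrow> p + l *s v \<in> U"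
  shows "(\<lambda>l. f (p + l *s v)) holomorphic_on L"
  unfolding holomorphic_on_def
proof
  fix l assume l: "l \<in> L"
  obtain D where D: "(f has_derivative D) (at (p + l *s v))" and lin: "\<forall>c v. D (c *s v) = c * D v"
    using assms(1) assms(3)[OF l] unfolding holomorphic_several_def by blast
  have d1: "((\<lambda>l. p + l *s v) has_derivative (\<lambda>c. c *s v)) (at l)"
  proof -
    have "((\<lambda>c. c *s v) has_derivative (\<lambda>c. c *s v)) (at l)"
      by (rule bounded_linear_imp_has_derivative[OF bl_smult])
    then show ?thesis using has_derivative_add[OF has_derivative_const[of p] ] by simp
  qed
  have "((\<lambda>l. f (p + l *s v)) has_derivative (\<lambda>c. D (c *s v))) (at l)"
    using diff_chain_at[OF d1 D] by (simp add: o_def)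
  then have "((\<lambda>l. f (p + l *s v)) has_field_derivative D v) (at l)"
    unfolding has_field_derivative_def using lin by (simp add: mult.commute[of _ "D v"])
  then show "(\<lambda>l. f (p + l *s v)) field_differentiable at l within L"
    using field_differentiable_at_within field_differentiable_def by blast
qed

lemma cont_im_part: "continuous_on UNIV im_part"
  unfolding im_part_def by (intro continuous_intros)

lemma open_tube: "open B \<Longrightarrow> open (tube B)"
proof -
  assume "open B"
  have "tube B = im_part -` B" by (auto simp: tube_def)
  then show ?thesis using open_vimage[OF \<open>open B\<close> cont_im_part] by simp
qed

lemma cont_line: "continuous_on UNIV (\<lambda>l::complex. p + l *s (v::complex^'n))"
  by (intro continuous_intros linear_continuous_on bl_smult)

lemma open_line_pre: "open (C::(complex^'n) set) \<Longrightarrow> open {l. p + l *s v \<in> C}"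
  using open_vimage[OF _ cont_line, of C p v] by (simp add: vimage_def)

lemma comb_mult: "(a *\<^sub>R l + b *\<^sub>R m) * (x::complex) = a *\<^sub>R (l * x) + b *\<^sub>R (m * x)"
  by (simp add: distrib_right)

lemma line_affine:
  fixes p v :: "complex^'n"
  assumes "a + b = 1"
  shows "p + (a *\<^sub>R l + b *\<^sub>R m) *s v = a *\<^sub>R (p + l *s v) + b *\<^sub>R (p + m *s v)"
proof -
  have 1: "p $ i = a *\<^sub>R p $ i + b *\<^sub>R p $ i" for i
    by (metis scaleR_add_left scaleR_one assms)
  have 2: "(a *\<^sub>R l + b *\<^sub>R m) * v $ i = a *\<^sub>R (l * v $ i) + b *\<^sub>R (m * v $ i)" for i
    by (rule comb_mult)
  show ?thesis
    unfolding vec_eq_iff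
  proof
    fix i
    have "(p + (a *\<^sub>R l + b *\<^sub>R m) *s v) $ i = p $ i + (a *\<^sub>R l + b *\<^sub>R m) * v $ i"
      by (simp only: vector_add_component vector_smult_component)
    also have "\<dots> = a *\<^sub>R (p $ i + l * v $ i) + b *\<^sub>R (p $ i + m * v $ i)"
      by (subst 1, subst 2) (simp add: scaleR_right_distrib)
    finally show "(p + (a *\<^sub>R l + b *\<^sub>R m) *s v) $ i = (a *\<^sub>R (p + l *s v) + b *\<^sub>R (p + m *s v)) $ i"
      by simp
  qed
qed

lemma im_part_comb: "im_part (a *\<^sub>R z + b *\<^sub>R w) = a *\<^sub>R im_part z + b *\<^sub>R im_part w"
  by (simp add: im_part_def vec_eq_iff)

lemma convex_tube: "convex B \<Longrightarrow> convex (tube B)"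
  unfolding tube_def convex_def by (simp add: im_part_comb)

lemma convex_line_pre: "convex (C::(complex^'n) set) \<Longrightarrow> convex {l. p + l *s v \<in> C}"
proof (rule convexI)
  fix l m :: complex and a b :: real
  assume "convex C" and *: "l \<in> {l. p + l *s v \<in> C}" "m \<in> {l. p + l *s v \<in> C}" "0 \<le> a" "0 \<le> b" "a + b = 1"
  show "a *\<^sub>R l + b *\<^sub>R m \<in> {l. p + l *s v \<in> C}"
    unfolding mem_Collect_eq line_affine[OF *(5)]
    using * by (intro convexD[OF \<open>convex C\<close>]) auto
qed

lemma line_identity:
  assumes hs: "holomorphic_several f U" and CU: "C \<subseteq> U" and oC: "open C" and cC: "convex C"
    and wC: "w \<in> C" and oV: "open V" and wV: "w \<in> V" and f0: "\<And>z. z \<in> V \<Longrightarrow> f z = 0"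
    and uC: "u \<in> C"
  shows "f u = 0"
proof -
  define L where "L = {l. w + l *s (u - w) \<in> C}"
  define S where "S = {l. w + l *s (u - w) \<in> C \<inter> V}"
  have oL: "open L" unfolding L_def by (rule open_line_pre[OF oC])
  have oS: "open S" unfolding S_def by (rule open_line_pre) (use oC oV in auto)
  have cL: "connected L" unfolding L_def
    by (rule convex_connected, rule convex_line_pre[OF cC])
  have hol: "(\<lambda>l. f (w + l *s (u - w))) holomorphic_on L"
    by (rule line_holo[OF hs oL]) (use CU L_def in auto)
  have "0 \<in> S" using wC wV by (simp add: S_def)
  moreover have "S \<subseteq> L" by (auto simp: S_def L_def)
  moreover have "1 \<in> L" using uC by (simp add: L_def)
  moreover have "\<And>z. z \<in> S \<Longrightarrow> f (w + z *s (u - w)) = 0" using f0 by (simp add: S_def)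
  ultimately have "(\<lambda>l. f (w + l *s (u - w))) 1 = (\<lambda>_. 0) 1"
    using analytic_continuation_open[OF oS oL _ cL _ hol holomorphic_on_const, of 0 1] by blast
  then show ?thesis by simp
qed

lemma tube_mono: "A \<subseteq> B \<Longrightarrow> tube A \<subseteq> tube B"
  by (auto simp: tube_def)

lemma ul_compose:
  assumes "uniform_limit A f g F" "\<And>x. x \<in> K \<Longrightarrow> \<phi> x \<in> A"
  shows "uniform_limit K (\<lambda>n x. f n (\<phi> x)) (\<lambda>x. g (\<phi> x)) F"
  unfolding uniform_limit_iff
proof (intro allI impI)
  fix e :: real assume "e > 0"
  from uniform_limitD[OF assms(1) this] show "\<forall>\<^sub>F n in F. \<forall>x\<in>K. dist (f n (\<phi> x)) (g (\<phi> x)) < e"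
    by (rule eventually_mono) (use assms(2) in blast)
qed

lemma hol_cont: "holomorphic_several f U \<Longrightarrow> z \<in> U \<Longrightarrow> isCont f z"
  unfolding holomorphic_several_def using has_derivative_continuous by blast

lemma limit_holo:
  fixes G :: "complex \<Rightarrow> complex"
  assumes hol: "\<And>n::nat. Fn n holomorphic_on L" and oL: "open L"
    and ul: "\<And>K. compact K \<Longrightarrow> K \<subseteq> L \<Longrightarrow> uniform_limit K Fn G sequentially"
  shows "G holomorphic_on L"
  unfolding holomorphic_on_def
proof
  fix l assume "l \<in> L"
  then obtain r where r: "r > 0" "cball l r \<subseteq> L" using oL open_contains_cball by blast
  have "eventually (\<lambda>n. continuous_on (cball l r) (Fn n) \<and> (Fn n) holomorphic_on ball l r) sequentially"
  proof (intro always_eventually allI conjI)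
    fix n
    show "continuous_on (cball l r) (Fn n)"
      using hol[of n] r(2) holomorphic_on_imp_continuous_on holomorphic_on_subset by blast
    show "Fn n holomorphic_on ball l r"
      using hol[of n] r(2) ball_subset_cball holomorphic_on_subset by blast
  qed
  then obtain "G holomorphic_on ball l r"
    using holomorphic_uniform_limit[OF _ ul[OF compact_cball r(2)]] by auto
  then have "G field_differentiable at l"
    using holomorphic_on_imp_differentiable_at r(1) by auto
  then show "G field_differentiable at l within L"
    using field_differentiable_at_within by blast
qed

theorem mainTheorem4:
  fixes \<Omega> D0 D0' :: "(real^'n) set" and f :: "complex^'n \<Rightarrow> complex"
  assumes "open \<Omega>" and "connected \<Omega>" and "\<Omega> \<noteq> {}"
    and "f \<in> AP \<Omega>"
    and "\<exists>z\<in>tube \<Omega>. f z \<noteq> 0"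
    and "D0 \<in> components (\<Omega> - amoeba \<Omega> f)"
    and "D0' \<Subset> D0"
  shows "\<exists>\<beta>>0. \<forall>z\<in>tube D0'. norm (f z) \<ge> \<beta>"
proof (rule ccontr)
  assume contra: "\<not> ?thesis"
  have hol: "holomorphic_several f (tube \<Omega>)" using assms(4) by (simp add: AP_def)
  have apc: "\<And>t :: nat \<Rightarrow> real^'n. \<exists>r g. strict_mono r \<and>
        (\<forall>D. D \<Subset> \<Omega> \<longrightarrow> uniform_limit (tube D) (\<lambda>n z. f (rtrans z (t (r n)))) g sequentially)"
    using assms(4) by (simp add: AP_def)
  define X where "X = {y \<in> \<Omega>. \<exists>x. f (cvec x y) = 0}"
  have am: "amoeba \<Omega> f = closure X \<inter> \<Omega>" by (simp add: amoeba_def X_def)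
  have D0sub: "D0 \<subseteq> \<Omega> - closure X"
    using in_components_subset[OF assms(6)] am by auto
  have oD0: "open D0"
  proof -
    have "\<Omega> - amoeba \<Omega> f = \<Omega> - closure X" using am by auto
    then have "open (\<Omega> - amoeba \<Omega> f)" using assms(1) by (simp add: open_Diff)
    then show ?thesis using open_components assms(6) by blast
  qed
  have D0O: "D0 \<subseteq> \<Omega>" using D0sub by auto
  have nz: "f z \<noteq> 0" if "im_part z \<in> D0" for z
  proof
    assume "f z = 0"
    then have "f (cvec (re_part z) (im_part z)) = 0" by simp
    then have "im_part z \<in> X" using that D0O unfolding X_def by blast
    then show False using that D0sub closure_subset by blast
  qed
  have cD0': "compact (closure D0')" "closure D0' \<subseteq> D0"
    using assms(7) by (auto simp: compactly_contained_def)
  have "\<forall>n. \<exists>z\<in>tube D0'. norm (f z) < inverse (real (Suc n))"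
    using contra by (metis not_le of_nat_0_less_iff positive_imp_inverse_positive zero_less_Suc)
  then obtain Z where Z: "\<And>n. Z n \<in> tube D0'" "\<And>n. norm (f (Z n)) < inverse (real (Suc n))"
    by metis
  define Y where "Y n = im_part (Z n)" for n
  have "Y n \<in> closure D0'" for n using Z(1) closure_subset by (auto simp: Y_def tube_def)
  then obtain y0 r1 where y0: "y0 \<in> closure D0'" and r1: "strict_mono r1" "(Y \<circ> r1) \<longlonglongrightarrow> y0"
    using cD0'(1) unfolding compact_def by metis
  have y0D0: "y0 \<in> D0" using y0 cD0' by auto
  obtain \<delta> where \<delta>: "\<delta> > 0" "cball y0 \<delta> \<subseteq> D0" using oD0 y0D0 open_contains_cball by blast
  define B where "B = ball y0 \<delta>"
  have BD0: "B \<subseteq> D0" using \<delta> ball_subset_cball by (auto simp: B_def)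
  have BO: "B \<subseteq> \<Omega>" using BD0 D0O by auto
  have Bcc: "B \<Subset> \<Omega>" using \<delta> D0O by (auto simp: compactly_contained_def B_def)
  obtain r2 g where r2: "strict_mono r2"
    and ulall: "\<And>D. D \<Subset> \<Omega> \<Longrightarrow> uniform_limit (tube D) (\<lambda>n z. f (rtrans z (re_part (Z (r1 (r2 n)))))) g sequentially"
    using apc[of "\<lambda>n. re_part (Z (r1 n))"] by auto
  define S where "S n = re_part (Z (r1 (r2 n)))" for n
  define F where "F n z = f (rtrans z (S n))" for n z
  have ul: "uniform_limit (tube B) F g sequentially"
  proof -
    have "F = (\<lambda>n z. f (rtrans z (re_part (Z (r1 (r2 n))))))" by (simp add: F_def[abs_def] S_def)
    then show ?thesis using ulall[OF Bcc] by simp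
  qed
  have oTB: "open (tube B)" by (simp add: open_tube B_def)
  have TBO: "tube B \<subseteq> tube \<Omega>" using BO by (rule tube_mono)
  have contF: "continuous_on (tube B) (F n)" for n
  proof -
    have "isCont (F n) z" if "z \<in> tube B" for z
    proof -
      have "isCont (\<lambda>z. rtrans z (S n)) z" unfolding rtrans_def by (intro continuous_intros)
      moreover have "isCont f (rtrans z (S n))" using hol that TBO by (intro hol_cont) auto
      ultimately show ?thesis unfolding F_def by (rule isCont_o2)
    qed
    then show ?thesis by (simp add: continuous_at_imp_continuous_on)
  qed
  have contg: "continuous_on (tube B) g"
    by (rule uniform_limit_theorem[OF _ ul]) (auto simp: contF)
  define w0 where "w0 = cvec 0 y0"
  have w0B: "w0 \<in> tube B" using \<delta> by (simp add: w0_def tube_def B_def)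
  define r where "r = r1 \<circ> r2"
  have r: "strict_mono r" using r1(1) r2 by (simp add: r_def strict_mono_o)
  define W where "W n = cvec 0 (Y (r n))" for n
  have Ylim: "(\<lambda>n. Y (r n)) \<longlonglongrightarrow> y0"
    using LIMSEQ_subseq_LIMSEQ[OF r1(2) r2] by (simp add: r_def o_def)
  have Wlim: "W \<longlonglongrightarrow> w0"
    unfolding W_def w0_def cvec_def
    by (intro tendsto_intros tendsto_vec_nth Ylim)
  have evB: "eventually (\<lambda>n. W n \<in> tube B) sequentially"
  proof -
    have "eventually (\<lambda>n. Y (r n) \<in> B) sequentially"
      using Ylim \<delta>(1) unfolding B_def by (intro topological_tendstoD) auto
    then show ?thesis by (rule eventually_mono) (simp add: W_def tube_def)
  qed
  have FW: "F n (W n) = f (Z (r n))" for n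
  proof -
    have "Z (r n) = rtrans (W n) (S n)"
      using rtrans_cvec0[of "Y (r n)" "S n"] cvec_parts[of "Z (r n)"]
      by (simp add: W_def S_def Y_def r_def)
    then show ?thesis by (simp add: F_def)
  qed
  have FW0: "(\<lambda>n. F n (W n)) \<longlonglongrightarrow> 0"
  proof (rule Lim_null_comparison)
    show "\<forall>\<^sub>F n in sequentially. norm (F n (W n)) \<le> inverse (real (Suc n))"
    proof (intro always_eventually allI)
      fix n
      have "n \<le> r n" using seq_suble[OF r] .
      then have i1: "inverse (real (Suc (r n))) \<le> inverse (real (Suc n))"
        by (intro le_imp_inverse_le) auto
      have i2: "norm (F n (W n)) < inverse (real (Suc (r n)))"
        using Z(2)[of "r n"] FW[of n] by simp
      show "norm (F n (W n)) \<le> inverse (real (Suc n))"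
        using i1 i2 by linarith
    qed
  qed (rule LIMSEQ_inverse_real_of_nat)
  have gW: "(\<lambda>n. g (W n)) \<longlonglongrightarrow> g w0"
  proof -
    have "isCont g w0" using contg oTB w0B continuous_on_eq_continuous_at by blast
    then show ?thesis using Wlim by (rule isCont_tendsto_compose)
  qed
  have diff0: "(\<lambda>n. F n (W n) - g (W n)) \<longlonglongrightarrow> 0"
    unfolding tendsto_iff
  proof (intro allI impI)
    fix e :: real assume "e > 0"
    from uniform_limitD[OF ul this] evB
    show "\<forall>\<^sub>F n in sequentially. dist (F n (W n) - g (W n)) 0 < e"
      by eventually_elim (simp add: dist_norm)
  qed
  have "(\<lambda>n. (F n (W n) - g (W n)) + g (W n)) \<longlonglongrightarrow> 0 + g w0"
    by (intro tendsto_add diff0 gW)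
  then have "(\<lambda>n. F n (W n)) \<longlonglongrightarrow> g w0" by simp
  then have gw0: "g w0 = 0" using FW0 LIMSEQ_unique by blast
  have g0B: "g u = 0" if uB: "u \<in> tube B" for u
  proof -
    define v where "v = u - w0"
    define L where "L = {l. w0 + l *s v \<in> tube B}"
    have oL: "open L" unfolding L_def by (rule open_line_pre[OF oTB])
    have cvL: "convex L" unfolding L_def
      by (rule convex_line_pre, rule convex_tube) (simp add: B_def)
    have L0: "0 \<in> L" using w0B by (simp add: L_def)
    have L1: "1 \<in> L" using uB by (simp add: L_def v_def)
    define Fn where "Fn n l = F n (w0 + l *s v)" for n l
    define G where "G l = g (w0 + l *s v)" for l
    have Fn_eq: "Fn n l = f (rtrans w0 (S n) + l *s v)" for n l
      by (simp add: Fn_def F_def rtrans_add)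
    have holFn: "Fn n holomorphic_on L" for n
    proof -
      have "(\<lambda>l. f (rtrans w0 (S n) + l *s v)) holomorphic_on L"
      proof (rule line_holo[OF hol oL])
        fix l assume "l \<in> L"
        then have "w0 + l *s v \<in> tube \<Omega>" using TBO by (auto simp: L_def)
        then show "rtrans w0 (S n) + l *s v \<in> tube \<Omega>"
          by (metis rtrans_add tube_rtrans)
      qed
      then show ?thesis by (simp add: Fn_eq[abs_def])
    qed
    have ulK: "uniform_limit K Fn G sequentially" if "compact K" "K \<subseteq> L" for K
      unfolding Fn_def[abs_def] G_def[abs_def]
      by (rule ul_compose[OF ul]) (use that in \<open>auto simp: L_def\<close>)
    have holG: "G holomorphic_on L"
      by (rule limit_holo[OF holFn oL ulK])
    have nzFn: "Fn n l \<noteq> 0" if "l \<in> L" for n l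
    proof -
      have "im_part (rtrans (w0 + l *s v) (S n)) \<in> D0"
        using that BD0 by (auto simp: L_def tube_def)
      then show ?thesis using nz by (simp add: Fn_def F_def)
    qed
    have "G constant_on L"
    proof (rule ccontr)
      assume "\<not> G constant_on L"
      then have "G 0 \<noteq> 0"
        using Hurwitz_no_zeros[OF oL convex_connected[OF cvL] holFn holG ulK _ nzFn L0] by blast
      then show False using gw0 by (simp add: G_def)
    qed
    then have "G 1 = G 0" using L0 L1 unfolding constant_on_def by metis
    then show ?thesis using gw0 by (simp add: G_def v_def)
  qed
  have f0B: "f z = 0" if zB: "z \<in> tube B" for z
  proof (rule ccontr)
    assume "f z \<noteq> 0"
    then have "norm (f z) > 0" by simp
    from uniform_limitD[OF ul this] obtain N where
      N: "\<And>n. n \<ge> N \<Longrightarrow> \<forall>x\<in>tube B. dist (F n x) (g x) < norm (f z)"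
      unfolding eventually_sequentially by blast
    have z': "rtrans z (- S N) \<in> tube B" using zB by simp
    have e1: "F N (rtrans z (- S N)) = f z" by (simp add: F_def rtrans_rtrans)
    have e2: "dist (F N (rtrans z (- S N))) (g (rtrans z (- S N))) < norm (f z)"
      using N[of N] z' by blast
    have "dist (f z) 0 < norm (f z)" using e2 unfolding e1 g0B[OF z'] .
    then show False by simp
  qed
  define S1 where "S1 = {y. \<exists>d>0. ball y d \<subseteq> \<Omega> \<and> (\<forall>z\<in>tube (ball y d). f z = 0)}"
  define T1 where "T1 = {y. \<exists>e>0. ball y e \<subseteq> \<Omega> \<and> ball y e \<inter> S1 = {}}"
  have ballsub: "ball y' (d - dist y y') \<subseteq> ball y d" for y y' :: "real^'n" and d
  proof
    fix x assume "x \<in> ball y' (d - dist y y')"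
    then have "dist y' x < d - dist y y'" by simp
    moreover have "dist y x \<le> dist y y' + dist y' x" by (rule dist_triangle)
    ultimately show "x \<in> ball y d" by simp
  qed
  have oS1: "open S1"
    unfolding open_contains_ball
  proof
    fix y assume "y \<in> S1"
    then obtain d where d: "d > 0" "ball y d \<subseteq> \<Omega>" "\<forall>z\<in>tube (ball y d). f z = 0"
      by (auto simp: S1_def)
    have "ball y d \<subseteq> S1"
    proof
      fix y' assume y': "y' \<in> ball y d"
      have "ball y' (d - dist y y') \<subseteq> ball y d" by (rule ballsub)
      moreover have "d - dist y y' > 0" using y' by simp
      moreover have "\<forall>z\<in>tube (ball y' (d - dist y y')). f z = 0"
        using d(3) tube_mono[OF \<open>ball y' (d - dist y y') \<subseteq> ball y d\<close>] by blast
      ultimately show "y' \<in> S1" unfolding S1_def using d(2) by blast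
    qed
    then show "\<exists>e>0. ball y e \<subseteq> S1" using d(1) by blast
  qed
  have oT1: "open T1"
    unfolding open_contains_ball
  proof
    fix y assume "y \<in> T1"
    then obtain e where e: "e > 0" "ball y e \<subseteq> \<Omega>" "ball y e \<inter> S1 = {}"
      by (auto simp: T1_def)
    have "ball y e \<subseteq> T1"
    proof
      fix y' assume y': "y' \<in> ball y e"
      have bs: "ball y' (e - dist y y') \<subseteq> ball y e" by (rule ballsub)
      have "e - dist y y' > 0" using y' by simp
      then show "y' \<in> T1" unfolding T1_def using bs e by blast
    qed
    then show "\<exists>e>0. ball y e \<subseteq> T1" using e(1) by blast
  qed
  have cover: "\<Omega> \<subseteq> S1 \<union> T1"
  proof
    fix y assume "y \<in> \<Omega>"
    then obtain e where e: "e > 0" "ball y e \<subseteq> \<Omega>" using assms(1) open_contains_ball by blast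
    show "y \<in> S1 \<union> T1"
    proof (cases "ball y (e/2) \<inter> S1 = {}")
      case True
      have "ball y (e/2) \<subseteq> \<Omega>" using e by (simp add: subset_eq)
      then have "y \<in> T1" unfolding T1_def using e(1) True by (intro CollectI exI[of _ "e/2"]) simp
      then show ?thesis by simp
    next
      case False
      then obtain y' d where y': "y' \<in> ball y (e/2)" "d > 0" "\<forall>z\<in>tube (ball y' d). f z = 0"
        by (auto simp: S1_def)
      have "\<forall>u\<in>tube (ball y e). f u = 0"
      proof
        fix u assume u: "u \<in> tube (ball y e)"
        show "f u = 0"
        proof (rule line_identity[OF hol _ open_tube[OF open_ball] convex_tube[OF convex_ball] _ open_tube[OF open_ball]])
          show "tube (ball y e) \<subseteq> tube \<Omega>" using e(2) by (rule tube_mono)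
          have "dist y y' < e/2" using y'(1) by simp
          then have "dist y y' < e" using zero_le_dist[of y y'] by linarith
          then show "cvec 0 y' \<in> tube (ball y e)" by (simp add: tube_def)
          show "cvec 0 y' \<in> tube (ball y' d)" using y' by (simp add: tube_def)
          show "\<And>z. z \<in> tube (ball y' d) \<Longrightarrow> f z = 0" using y' by blast
          show "u \<in> tube (ball y e)" by (rule u)
        qed
      qed
      then have "y \<in> S1" unfolding S1_def using e by blast
      then show ?thesis by simp
    qed
  qed
  have disj: "S1 \<inter> T1 \<inter> \<Omega> = {}"
  proof -
    have "y \<notin> T1" if "y \<in> S1" for y
    proof
      assume "y \<in> T1"
      then obtain e where "e > 0" "ball y e \<inter> S1 = {}" unfolding T1_def by blast
      then show False using that centre_in_ball[of y e] by blast
    qed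
    then show ?thesis by blast
  qed
  have y0S1: "y0 \<in> S1 \<inter> \<Omega>"
  proof -
    have "ball y0 \<delta> \<subseteq> \<Omega>" using BO by (simp add: B_def)
    then show ?thesis unfolding S1_def using \<delta>(1) f0B D0O y0D0 by (auto simp: B_def)
  qed
  have "S1 \<inter> \<Omega> = {} \<or> T1 \<inter> \<Omega> = {}"
    using connectedD[OF assms(2) oS1 oT1 disj cover] .
  then have OS1: "\<Omega> \<subseteq> S1" using y0S1 cover by blast
  obtain z where z: "z \<in> tube \<Omega>" "f z \<noteq> 0" using assms(5) by blast
  then have "im_part z \<in> S1" using OS1 by (auto simp: tube_def)
  then obtain d where "d > 0" "\<forall>w\<in>tube (ball (im_part z) d). f w = 0" by (auto simp: S1_def)
  then have "f z = 0" by (simp add: tube_def)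
  then show False using z(2) by simp
qed

end
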